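(* Consider a nonempty configuration with largest nonempty level $\lambda$, and let $G,G'$ be integers with $A(G)<2^b$ and $A(G')<2^b$. Then every level $\ell$ with $A_\ell(G)\ne A_\ell(G')$ lies in the integer interval $[\theta(H,z),\lambda]$, where $H=\max\{G,G'\}$ and $\theta(H,z)=-b-H-\lfloor\log_2z\rfloor$, and this interval contains at most $2b$ integers. In particular, at most $2b$ levels satisfy $A_\ell(G)\neq A_\ell(G')$.
   Context: Fix an integer $b\ge 2$. There is a set $\mathcal L$ of $N$ levels, which are consecutive integers. Each level $\ell$ holds a finite (possibly empty) multiset of normalized significands, each an integer in $[2^{b-1},2^b)$. Let $z$ be the total number of stored significands over all levels; assume $z<2^b$. For each level, $SS_\ell$ is the sum of its significands (so $SS_\ell=0$ iff the level is empty); set $SS_\ell=0$ for integers $\ell\notin\mathcal L$. The level weight is $W_\ell=SS_\ell2^\ell$. For an integer global shift $G$, $A_\ell(G)=\lfloor W_\ell2^G\rfloor+1$ if $SS_\ell>0$ and $A_\ell(G)=0$ if $SS_\ell=0$; $A(G)=\sum_\ell A_\ell(G)$. The configuration is nonempty if $z\ge1$. *)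

theory Defs
  imports Complex_Main "HOL-Library.Multiset"
begin

text \<open>A configuration: a set L of levels (consecutive integers) and a function M
  assigning to each level a multiset of significands. Only levels in L count.\<close>

definition SS :: "int set \<Rightarrow> (int \<Rightarrow> nat multiset) \<Rightarrow> int \<Rightarrow> nat" where
  "SS L M l = (if l \<in> L then sum_mset (M l) else 0)"

definition zcount :: "int set \<Rightarrow> (int \<Rightarrow> nat multiset) \<Rightarrow> nat" where
  "zcount L M = (\<Sum>l\<in>L. size (M l))"

definition W :: "int set \<Rightarrow> (int \<Rightarrow> nat multiset) \<Rightarrow> int \<Rightarrow> real" where
  "W L M l = real (SS L M l) * 2 powr real_of_int l"

definition Alev :: "int set \<Rightarrow> (int \<Rightarrow> nat multiset) \<Rightarrow> int \<Rightarrow> int \<Rightarrow> int" where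
  "Alev L M G l = (if SS L M l > 0 then \<lfloor>W L M l * 2 powr real_of_int G\<rfloor> + 1 else 0)"

definition Atot :: "int set \<Rightarrow> (int \<Rightarrow> nat multiset) \<Rightarrow> int \<Rightarrow> int" where
  "Atot L M G = (\<Sum>l\<in>L. Alev L M G l)"

definition theta :: "nat \<Rightarrow> int \<Rightarrow> nat \<Rightarrow> int" where
  "theta b H z = - int b - H - \<lfloor>log 2 (real z)\<rfloor>"

end

theory Submission
  imports Defs
begin

lemma sum_mset_le_size: "(\<And>s. s \<in># A \<Longrightarrow> s \<le> c) \<Longrightarrow> sum_mset A \<le> size A * (c::nat)"
  by (induction A) (auto simp: add_mono)

lemma small_level:
  fixes b :: nat and L :: "int set" and M :: "int \<Rightarrow> nat multiset" and lo hi H G0 l :: int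
  assumes levels: "L = {lo..hi}"
    and sig: "\<And>l s. l \<in> L \<Longrightarrow> s \<in># M l \<Longrightarrow> 2 ^ (b - 1) \<le> s \<and> s < 2 ^ b"
    and nonempty: "zcount L M \<ge> 1"
    and GH: "G0 \<le> H"
    and pos: "SS L M l > 0"
    and lt: "l < theta b H (zcount L M)"
  shows "Alev L M G0 l = 1"
proof -
  define z where "z = zcount L M"
  define k where "k = \<lfloor>log 2 (real z)\<rfloor>"
  have lL: "l \<in> L" using pos by (simp add: SS_def split: if_splits)
  have fin: "finite L" using levels by simp
  have sz: "size (M l) \<le> z" unfolding z_def zcount_def
    using member_le_sum[OF lL _ fin, of "\<lambda>l. size (M l)"] by simp
  have "SS L M l \<le> size (M l) * 2 ^ b"
    unfolding SS_def using lL by (simp, intro sum_mset_le_size) (use sig[OF lL] in fastforce)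
  also have "\<dots> \<le> z * 2 ^ b" using sz by simp
  finally have SSle: "real (SS L M l) \<le> real z * 2 powr real b"
    by (metis of_nat_le_iff of_nat_mult of_nat_numeral powr_realpow real_of_nat_less_numeral_iff zero_less_numeral of_nat_power)
  have z1: "real z \<ge> 1" using nonempty z_def by simp
  have "log 2 (real z) < real_of_int k + 1" unfolding k_def by linarith
  hence zlt: "real z < 2 powr (real_of_int k + 1)"
    using z1 by (subst (asm) log_less_iff) auto
  have lt2: "real_of_int l + real b + real_of_int H \<le> - real_of_int k - 1"
    using lt unfolding theta_def k_def z_def by linarith
  have "W L M l * 2 powr real_of_int H = real (SS L M l) * 2 powr (real_of_int l + real_of_int H)"
    unfolding W_def by (simp add: powr_add)
  also have "\<dots> \<le> real z * 2 powr real b * 2 powr (real_of_int l + real_of_int H)"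
    using SSle by (simp add: mult_right_mono)
  also have "\<dots> = real z * 2 powr (real_of_int l + real b + real_of_int H)"
    by (simp add: powr_add[symmetric] algebra_simps)
  also have "\<dots> \<le> real z * 2 powr (- real_of_int k - 1)"
    using lt2 z1 by (intro mult_left_mono) auto
  also have "\<dots> < 2 powr (real_of_int k + 1) * 2 powr (- real_of_int k - 1)"
    using zlt by simp
  also have "\<dots> = 1" by (simp add: powr_add[symmetric])
  finally have WH: "W L M l * 2 powr real_of_int H < 1" .
  have W0: "W L M l \<ge> 0" unfolding W_def by simp
  have "W L M l * 2 powr real_of_int G0 \<le> W L M l * 2 powr real_of_int H"
    using GH W0 by (intro mult_left_mono) auto
  hence "W L M l * 2 powr real_of_int G0 < 1" using WH by linarith
  moreover have "W L M l * 2 powr real_of_int G0 \<ge> 0" using W0 by simp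
  ultimately have "\<lfloor>W L M l * 2 powr real_of_int G0\<rfloor> = 0" by (simp add: floor_eq_iff)
  thus ?thesis using pos unfolding Alev_def by simp
qed

theorem mainTheorem12:
  fixes b :: nat and L :: "int set" and M :: "int \<Rightarrow> nat multiset"
    and lo hi G G' :: int
  assumes b2: "b \<ge> 2"
    and levels: "L = {lo..hi}"
    and sig: "\<And>l s. l \<in> L \<Longrightarrow> s \<in># M l \<Longrightarrow> 2 ^ (b - 1) \<le> s \<and> s < 2 ^ b"
    and zsmall: "zcount L M < 2 ^ b"
    and nonempty: "zcount L M \<ge> 1"
    and AG: "Atot L M G < 2 ^ b"
    and AG': "Atot L M G' < 2 ^ b"
  shows "(\<forall>l. Alev L M G l \<noteq> Alev L M G' l \<longrightarrow>
            theta b (max G G') (zcount L M) \<le> l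
            \<and> l \<le> Max {l \<in> L. M l \<noteq> {#}})
         \<and> card {theta b (max G G') (zcount L M) .. Max {l \<in> L. M l \<noteq> {#}}} \<le> 2 * b
         \<and> card {l. Alev L M G l \<noteq> Alev L M G' l} \<le> 2 * b"
proof -
  define H where "H = max G G'"
  define lam where "lam = Max {l \<in> L. M l \<noteq> {#}}"
  define th where "th = theta b H (zcount L M)"
  have fin: "finite L" using levels by simp
  have "\<exists>l\<in>L. M l \<noteq> {#}"
  proof (rule ccontr)
    assume "\<not> ?thesis"
    hence "zcount L M = 0" unfolding zcount_def by simp
    thus False using nonempty by simp
  qed
  hence ne: "{l \<in> L. M l \<noteq> {#}} \<noteq> {}" by blast
  have finS: "finite {l \<in> L. M l \<noteq> {#}}" using fin by simp
  have lamin: "lam \<in> L" "M lam \<noteq> {#}" using Max_in[OF finS ne] lam_def by auto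
  have lammax: "\<And>l. l \<in> L \<Longrightarrow> M l \<noteq> {#} \<Longrightarrow> l \<le> lam"
    using Max_ge[OF finS] lam_def by auto
  have SSpos: "\<And>l. SS L M l > 0 \<Longrightarrow> l \<in> L \<and> M l \<noteq> {#}"
    unfolding SS_def by (auto split: if_splits)
  have Alev0: "\<And>G0 l. SS L M l = 0 \<Longrightarrow> Alev L M G0 l = 0" unfolding Alev_def by simp
  have part1: "\<forall>l. Alev L M G l \<noteq> Alev L M G' l \<longrightarrow> th \<le> l \<and> l \<le> lam"
  proof (intro allI impI)
    fix l assume d: "Alev L M G l \<noteq> Alev L M G' l"
    hence pos: "SS L M l > 0" using Alev0 by fastforce
    have "l \<le> lam" using SSpos[OF pos] lammax by blast
    moreover have "th \<le> l"
    proof (rule ccontr)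
      assume "\<not> th \<le> l"
      hence lt: "l < theta b H (zcount L M)" using th_def by simp
      have "Alev L M G l = 1" "Alev L M G' l = 1"
        using small_level[OF levels sig nonempty _ pos lt] H_def by auto
      thus False using d by simp
    qed
    ultimately show "th \<le> l \<and> l \<le> lam" by simp
  qed
  obtain s where s: "s \<in># M lam" using lamin(2) by (meson multiset_nonemptyE)
  have s1: "2 ^ (b - 1) \<le> s" using sig[OF lamin(1) s] by simp
  obtain A where "M lam = add_mset s A" using s by (metis multi_member_split)
  hence "s \<le> sum_mset (M lam)" by simp
  hence SSl: "2 ^ (b - 1) \<le> SS L M lam" using s1 lamin(1) unfolding SS_def by simp
  have Alev_nn: "\<And>G0 l. Alev L M G0 l \<ge> 0"
  proof -
    fix G0 l
    have "W L M l \<ge> 0" unfolding W_def by simp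
    thus "Alev L M G0 l \<ge> 0" unfolding Alev_def by simp
  qed
  have "Alev L M H lam \<le> Atot L M H" unfolding Atot_def
    by (rule member_le_sum[OF lamin(1) _ fin]) (simp add: Alev_nn)
  also have "\<dots> < 2 ^ b" using AG AG' H_def by (cases "G \<le> G'") (auto simp: max_def)
  finally have Alam: "Alev L M H lam < 2 ^ b" .
  have SSlp: "SS L M lam > 0" using SSl by (metis le_zero_eq not_gr_zero power_not_zero zero_neq_numeral)
  have "real_of_int (Alev L M H lam) > W L M lam * 2 powr real_of_int H"
    unfolding Alev_def using SSlp by simp
  hence "W L M lam * 2 powr real_of_int H < 2 ^ b" using Alam
    by (metis of_int_less_iff of_int_numeral of_int_power less_trans)
  moreover have "W L M lam * 2 powr real_of_int H = real (SS L M lam) * 2 powr (real_of_int lam + real_of_int H)"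
    unfolding W_def by (simp add: powr_add)
  moreover have "real (SS L M lam) \<ge> 2 powr (real b - 1)"
  proof -
    have "real (SS L M lam) \<ge> 2 ^ (b - 1)" using SSl
      by (metis of_nat_le_iff of_nat_numeral of_nat_power)
    moreover have "(2::real) ^ (b - 1) = 2 powr (real b - 1)"
      using b2 by (simp add: powr_realpow[symmetric] of_nat_diff)
    ultimately show ?thesis by metis
  qed
  ultimately have "2 powr (real b - 1) * 2 powr (real_of_int lam + real_of_int H) < 2 powr real b"
    by (smt (verit, ccfv_SIG) mult_right_mono powr_ge_zero powr_realpow zero_less_numeral)
  hence "2 powr (real b - 1 + real_of_int lam + real_of_int H) < 2 powr real b"
    by (simp add: powr_add[symmetric] add.assoc)
  hence "real b - 1 + real_of_int lam + real_of_int H < real b" by simp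
  hence lamH: "lam + H \<le> 0" by linarith
  define z where "z = zcount L M"
  have z1: "real z \<ge> 1" using nonempty z_def by simp
  have "real z < 2 ^ b" using zsmall z_def by (metis of_nat_less_iff of_nat_numeral of_nat_power)
  hence "real z < 2 powr real b" by (simp add: powr_realpow)
  hence "log 2 (real z) < real b" using z1 by (simp add: log_less_iff)
  hence k: "\<lfloor>log 2 (real z)\<rfloor> \<le> int b - 1" by linarith
  have cardI: "card {th..lam} \<le> 2 * b"
    using lamH k unfolding th_def theta_def z_def by simp
  have sub: "{l. Alev L M G l \<noteq> Alev L M G' l} \<subseteq> {th..lam}" using part1 by auto
  have "card {l. Alev L M G l \<noteq> Alev L M G' l} \<le> card {th..lam}"
    by (rule card_mono[OF _ sub]) simp
  thus ?thesis using part1 cardI unfolding H_def lam_def th_def by simp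
qed

end
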